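(* Consider the following chemical reaction network (the ERK cascade with three phosphatases and no feedback) with 22 species RAF, pRAF, MEK, pMEK, ppMEK, ERK, pERK, ppERK, RAS, RAFPH, MEKPH, ERKPH, RAS-RAF, MEK-pRAF, pMEK-pRAF, ERK-ppMEK, pERK-ppMEK, RAF-RAFPH, ppMEK-MEKPH, pMEK-MEKPH, ppERK-ERKPH, pERK-ERKPH (each a separate species; names with a hyphen denote complexes formed by binding) and 30 reactions with rate constants $k_1,\dots,k_{30}$: RAF + RAS $\underset{k_2}{\overset{k_1}{\rightleftarrows}}$ RAS-RAF $\overset{k_3}{\to}$ pRAF + RAS; pRAF + RAFPH $\underset{k_5}{\overset{k_4}{\rightleftarrows}}$ RAF-RAFPH $\overset{k_6}{\to}$ RAF + RAFPH; MEK + pRAF $\underset{k_8}{\overset{k_7}{\rightleftarrows}}$ MEK-pRAF $\overset{k_9}{\to}$ pMEK + pRAF $\underset{k_{11}}{\overset{k_{10}}{\rightleftarrows}}$ pMEK-pRAF $\overset{k_{12}}{\to}$ ppMEK + pRAF; ppMEK + MEKPH $\underset{k_{14}}{\overset{k_{13}}{\rightleftarrows}}$ ppMEK-MEKPH $\overset{k_{15}}{\to}$ pMEK + MEKPH $\underset{k_{17}}{\overset{k_{16}}{\rightleftarrows}}$ pMEK-MEKPH $\overset{k_{18}}{\to}$ MEK + MEKPH; ERK + ppMEK $\underset{k_{20}}{\overset{k_{19}}{\rightleftarrows}}$ ERK-ppMEK $\overset{k_{21}}{\to}$ pERK + ppMEK $\underset{k_{23}}{\overset{k_{22}}{\rightleftarrows}}$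 pERK-ppMEK $\overset{k_{24}}{\to}$ ppERK + ppMEK; ppERK + ERKPH $\underset{k_{26}}{\overset{k_{25}}{\rightleftarrows}}$ ppERK-ERKPH $\overset{k_{27}}{\to}$ pERK + ERKPH $\underset{k_{29}}{\overset{k_{28}}{\rightleftarrows}}$ pERK-ERKPH $\overset{k_{30}}{\to}$ ERK + ERKPH. Then for every choice of positive rate constants $k\in\mathbb{R}^{30}_{>0}$, the associated mass-action system has toric steady states; in particular its steady state ideal is a binomial ideal.
   Context: For a reaction network with species concentrations $x=(x_1,\dots,x_s)$ and reactions $y\to y'$ (complexes $y,y'\in\mathbb{Z}_{\ge0}^s$, where a complex is a formal sum of species) with positive rate constants, the mass-action system is $\dot x = f(x;k)=\sum_{\text{reactions } y\to y'} k_{y\to y'}\, x^{y}(y'-y)$, whose components $f_1,\dots,f_s$ are polynomials in $x$. The steady state ideal is $J=\langle f_1,\dots,f_s\rangle\subseteq\mathbb{R}[x_1,\dots,x_s]$. The system has toric steady states if $J$ can be generated by binomials (polynomials with at most two terms) and $J$ admits nonnegative zeros. *)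

theory Defs
  imports Complex_Main "HOL-Library.Poly_Mapping"
begin

(* Multivariate real polynomials in variables x_0, x_1, ... are represented as
  finitely supported maps from monomials (exponent vectors) to real
  coefficients; this type is a commutative ring with convolution product. *)

type_synonym mpoly = "(nat \<Rightarrow>\<^sub>0 nat) \<Rightarrow>\<^sub>0 real"

definition vars :: "mpoly \<Rightarrow> nat set" where
  "vars p = (\<Union>m\<in>Poly_Mapping.keys p. Poly_Mapping.keys (m :: nat \<Rightarrow>\<^sub>0 nat))"

definition poly_in :: "nat \<Rightarrow> mpoly \<Rightarrow> bool" where
  "poly_in s p \<longleftrightarrow> vars p \<subseteq> {..<s}"

definition peval :: "mpoly \<Rightarrow> (nat \<Rightarrow> real) \<Rightarrow> real" where
  "peval p x = (\<Sum>m\<in>Poly_Mapping.keys p. Poly_Mapping.lookup p m * (\<Prod>i\<in>Poly_Mapping.keys m. x i ^ Poly_Mapping.lookup m i))"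

definition ideal_gen :: "nat \<Rightarrow> mpoly set \<Rightarrow> mpoly set" where
  "ideal_gen s F = {p. \<exists>S c. finite S \<and> S \<subseteq> F \<and> (\<forall>f\<in>S. poly_in s (c f)) \<and>
                          p = (\<Sum>f\<in>S. c f * f)}"

definition is_binomial :: "mpoly \<Rightarrow> bool" where
  "is_binomial p \<longleftrightarrow> card (Poly_Mapping.keys p) \<le> 2"

text \<open>A reaction is a pair (reactant complex y, product complex y') of complexes
  y, y' in Z_{\<ge>0}^s (exponent vectors).\<close>
type_synonym complex = "nat \<Rightarrow>\<^sub>0 nat"

text \<open>Component i of the mass-action vector field f(x;k) = sum_r k_r x^y (y' - y),
  for a list of reactions R, where reaction R!j has rate constant k (Suc j).\<close>
definition mass_action_poly :: "(complex \<times> complex) list \<Rightarrow> (nat \<Rightarrow> real) \<Rightarrow> nat \<Rightarrow> mpoly" where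
  "mass_action_poly R k i =
     (\<Sum>j<length R. Poly_Mapping.single (fst (R!j))
        (k (Suc j) * (real (Poly_Mapping.lookup (snd (R!j)) i) - real (Poly_Mapping.lookup (fst (R!j)) i))))"

definition steady_state_ideal :: "nat \<Rightarrow> (complex \<times> complex) list \<Rightarrow> (nat \<Rightarrow> real) \<Rightarrow> mpoly set" where
  "steady_state_ideal s R k = ideal_gen s {mass_action_poly R k i | i. i < s}"

definition has_toric_steady_states :: "nat \<Rightarrow> (complex \<times> complex) list \<Rightarrow> (nat \<Rightarrow> real) \<Rightarrow> bool" where
  "has_toric_steady_states s R k \<longleftrightarrow>
     (\<exists>B. (\<forall>b\<in>B. is_binomial b \<and> poly_in s b) \<and> steady_state_ideal s R k = ideal_gen s B) \<and>
     (\<exists>x. (\<forall>i<s. x i \<ge> 0) \<and> (\<forall>i<s. peval (mass_action_poly R k i) x = 0))"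

definition "RAF = (0::nat)"
definition "pRAF = (1::nat)"
definition "MEK = (2::nat)"
definition "pMEK = (3::nat)"
definition "ppMEK = (4::nat)"
definition "ERK = (5::nat)"
definition "pERK = (6::nat)"
definition "ppERK = (7::nat)"
definition "RAS = (8::nat)"
definition "RAFPH = (9::nat)"
definition "MEKPH = (10::nat)"
definition "ERKPH = (11::nat)"
definition "RAS_RAF = (12::nat)"
definition "MEK_pRAF = (13::nat)"
definition "pMEK_pRAF = (14::nat)"
definition "ERK_ppMEK = (15::nat)"
definition "pERK_ppMEK = (16::nat)"
definition "RAF_RAFPH = (17::nat)"
definition "ppMEK_MEKPH = (18::nat)"
definition "pMEK_MEKPH = (19::nat)"
definition "ppERK_ERKPH = (20::nat)"
definition "pERK_ERKPH = (21::nat)"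

definition sp :: "nat \<Rightarrow> complex" where
  "sp i = Poly_Mapping.single i 1"

definition erk_network :: "(complex \<times> complex) list" where
  "erk_network = [
    (sp RAF + sp RAS, sp RAS_RAF),            \<comment> \<open>k1\<close>
    (sp RAS_RAF, sp RAF + sp RAS),            \<comment> \<open>k2\<close>
    (sp RAS_RAF, sp pRAF + sp RAS),           \<comment> \<open>k3\<close>
    (sp pRAF + sp RAFPH, sp RAF_RAFPH),       \<comment> \<open>k4\<close>
    (sp RAF_RAFPH, sp pRAF + sp RAFPH),       \<comment> \<open>k5\<close>
    (sp RAF_RAFPH, sp RAF + sp RAFPH),        \<comment> \<open>k6\<close>
    (sp MEK + sp pRAF, sp MEK_pRAF),          \<comment> \<open>k7\<close>
    (sp MEK_pRAF, sp MEK + sp pRAF),          \<comment> \<open>k8\<close>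
    (sp MEK_pRAF, sp pMEK + sp pRAF),         \<comment> \<open>k9\<close>
    (sp pMEK + sp pRAF, sp pMEK_pRAF),        \<comment> \<open>k10\<close>
    (sp pMEK_pRAF, sp pMEK + sp pRAF),        \<comment> \<open>k11\<close>
    (sp pMEK_pRAF, sp ppMEK + sp pRAF),       \<comment> \<open>k12\<close>
    (sp ppMEK + sp MEKPH, sp ppMEK_MEKPH),    \<comment> \<open>k13\<close>
    (sp ppMEK_MEKPH, sp ppMEK + sp MEKPH),    \<comment> \<open>k14\<close>
    (sp ppMEK_MEKPH, sp pMEK + sp MEKPH),     \<comment> \<open>k15\<close>
    (sp pMEK + sp MEKPH, sp pMEK_MEKPH),      \<comment> \<open>k16\<close>
    (sp pMEK_MEKPH, sp pMEK + sp MEKPH),      \<comment> \<open>k17\<close>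
    (sp pMEK_MEKPH, sp MEK + sp MEKPH),       \<comment> \<open>k18\<close>
    (sp ERK + sp ppMEK, sp ERK_ppMEK),        \<comment> \<open>k19\<close>
    (sp ERK_ppMEK, sp ERK + sp ppMEK),        \<comment> \<open>k20\<close>
    (sp ERK_ppMEK, sp pERK + sp ppMEK),       \<comment> \<open>k21\<close>
    (sp pERK + sp ppMEK, sp pERK_ppMEK),      \<comment> \<open>k22\<close>
    (sp pERK_ppMEK, sp pERK + sp ppMEK),      \<comment> \<open>k23\<close>
    (sp pERK_ppMEK, sp ppERK + sp ppMEK),     \<comment> \<open>k24\<close>
    (sp ppERK + sp ERKPH, sp ppERK_ERKPH),    \<comment> \<open>k25\<close>
    (sp ppERK_ERKPH, sp ppERK + sp ERKPH),    \<comment> \<open>k26\<close>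
    (sp ppERK_ERKPH, sp pERK + sp ERKPH),     \<comment> \<open>k27\<close>
    (sp pERK + sp ERKPH, sp pERK_ERKPH),      \<comment> \<open>k28\<close>
    (sp pERK_ERKPH, sp pERK + sp ERKPH),      \<comment> \<open>k29\<close>
    (sp pERK_ERKPH, sp ERK + sp ERKPH)        \<comment> \<open>k30\<close>
  ]"

end

theory Submission
  imports Defs
begin

lemma lookup_sp: "Poly_Mapping.lookup (sp a) i = (if a = i then 1 else 0)"
  by (simp add: sp_def lookup_single when_def)
lemmas spdefs = RAF_def pRAF_def MEK_def pMEK_def ppMEK_def ERK_def pERK_def ppERK_def RAS_def RAFPH_def MEKPH_def ERKPH_def RAS_RAF_def MEK_pRAF_def pMEK_pRAF_def ERK_ppMEK_def pERK_ppMEK_def RAF_RAFPH_def ppMEK_MEKPH_def pMEK_MEKPH_def ppERK_ERKPH_def pERK_ERKPH_def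
lemmas CS = mass_action_poly_def erk_network_def spdefs lookup_add lookup_sp numeral_eq_Suc lessThan_Suc single_uminus single_add single_diff

lemma keys_add_nat: "Poly_Mapping.keys ((a::nat \<Rightarrow>\<^sub>0 nat) + b) = Poly_Mapping.keys a \<union> Poly_Mapping.keys b"
  by (auto simp: in_keys_iff lookup_add)

lemma vars_add: "vars (p + q) \<subseteq> vars p \<union> vars q"
  unfolding vars_def using keys_add[of p q] by blast

lemma vars_mult: "vars (p * q) \<subseteq> vars p \<union> vars q"
proof
  fix v assume "v \<in> vars (p * q)"
  then obtain m where m: "m \<in> Poly_Mapping.keys (p*q)" "v \<in> Poly_Mapping.keys m" unfolding vars_def by blast
  have "m \<in> {a + b | a b. a \<in> Poly_Mapping.keys p \<and> b \<in> Poly_Mapping.keys q}"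
    using keys_mult[of p q] m(1) by (rule subsetD)
  then obtain a b where "m = a + b" "a \<in> Poly_Mapping.keys p" "b \<in> Poly_Mapping.keys q"
    unfolding mem_Collect_eq by blast
  then have "v \<in> Poly_Mapping.keys a \<or> v \<in> Poly_Mapping.keys b" using m(2) keys_add_nat by simp
  then show "v \<in> vars p \<union> vars q" using \<open>a \<in> Poly_Mapping.keys p\<close> \<open>b \<in> Poly_Mapping.keys q\<close>
    unfolding vars_def by blast
qed

lemma vars_uminus: "vars (- p) = vars p"
  unfolding vars_def by simp

lemma poly_in_add: "poly_in s p \<Longrightarrow> poly_in s q \<Longrightarrow> poly_in s (p + q)"
  unfolding poly_in_def using vars_add by blast
lemma poly_in_mult: "poly_in s p \<Longrightarrow> poly_in s q \<Longrightarrow> poly_in s (p * q)"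
  unfolding poly_in_def using vars_mult by blast
lemma poly_in_uminus: "poly_in s p \<Longrightarrow> poly_in s (- p)"
  unfolding poly_in_def vars_uminus .
lemma poly_in_0: "poly_in s 0"
  unfolding poly_in_def vars_def by simp
lemma poly_in_1: "poly_in s 1"
  unfolding poly_in_def vars_def by simp

lemma ideal_zero: "0 \<in> ideal_gen s F"
  unfolding ideal_gen_def by (rule CollectI, rule exI[of _ "{}"]) simp

lemma ideal_base: "f \<in> F \<Longrightarrow> f \<in> ideal_gen s F"
  unfolding ideal_gen_def
  by (rule CollectI, rule exI[of _ "{f}"], rule exI[of _ "\<lambda>_. 1"]) (simp add: poly_in_1)

lemma ideal_add:
  assumes "p \<in> ideal_gen s F" "q \<in> ideal_gen s F"
  shows "p + q \<in> ideal_gen s F"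
proof -
  obtain S1 c1 where 1: "finite S1" "S1 \<subseteq> F" "\<forall>f\<in>S1. poly_in s (c1 f)" "p = (\<Sum>f\<in>S1. c1 f * f)"
    using assms(1) unfolding ideal_gen_def by blast
  obtain S2 c2 where 2: "finite S2" "S2 \<subseteq> F" "\<forall>f\<in>S2. poly_in s (c2 f)" "q = (\<Sum>f\<in>S2. c2 f * f)"
    using assms(2) unfolding ideal_gen_def by blast
  define d1 where "d1 f = (if f \<in> S1 then c1 f else 0)" for f
  define d2 where "d2 f = (if f \<in> S2 then c2 f else 0)" for f
  have e1: "p = (\<Sum>f\<in>S1 \<union> S2. d1 f * f)"
    unfolding 1(4) d1_def using 1(1) 2(1)
    by (intro sum.mono_neutral_cong_left) auto
  have e2: "q = (\<Sum>f\<in>S1 \<union> S2. d2 f * f)"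
    unfolding 2(4) d2_def using 1(1) 2(1)
    by (intro sum.mono_neutral_cong_left) auto
  have "p + q = (\<Sum>f\<in>S1 \<union> S2. (d1 f + d2 f) * f)"
    unfolding e1 e2 by (simp add: sum.distrib distrib_right)
  moreover have "\<forall>f\<in>S1 \<union> S2. poly_in s (d1 f + d2 f)"
    using 1(3) 2(3) unfolding d1_def d2_def by (auto intro!: poly_in_add simp: poly_in_0)
  ultimately show ?thesis unfolding ideal_gen_def using 1(1,2) 2(1,2)
    apply (intro CollectI exI[of _ "S1 \<union> S2"] exI[of _ "\<lambda>f. d1 f + d2 f"] conjI)
    apply simp_all
    done
qed

lemma ideal_mult:
  assumes "p \<in> ideal_gen s F" "poly_in s q"
  shows "q * p \<in> ideal_gen s F"
proof -
  obtain S1 c1 where 1: "finite S1" "S1 \<subseteq> F" "\<forall>f\<in>S1. poly_in s (c1 f)" "p = (\<Sum>f\<in>S1. c1 f * f)"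
    using assms(1) unfolding ideal_gen_def by blast
  have "q * p = (\<Sum>f\<in>S1. (q * c1 f) * f)"
    unfolding 1(4) by (simp add: sum_distrib_left mult.assoc)
  moreover have "\<forall>f\<in>S1. poly_in s (q * c1 f)" using 1(3) assms(2) by (auto intro: poly_in_mult)
  ultimately show ?thesis unfolding ideal_gen_def using 1(1,2)
    apply (intro CollectI exI[of _ "S1"] exI[of _ "\<lambda>f. q * c1 f"] conjI)
    apply simp_all
    done
qed

lemma ideal_uminus:
  assumes "p \<in> ideal_gen s F"
  shows "- p \<in> ideal_gen s F"
proof -
  have "(-1) * p \<in> ideal_gen s F" by (rule ideal_mult[OF assms]) (rule poly_in_uminus[OF poly_in_1])
  then show ?thesis by simp
qed

lemma ideal_sub:
  assumes "p \<in> ideal_gen s F" "q \<in> ideal_gen s F"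
  shows "p - q \<in> ideal_gen s F"
  using ideal_add[OF assms(1) ideal_uminus[OF assms(2)]] by simp

lemma ideal_subset:
  assumes "F \<subseteq> ideal_gen s B"
  shows "ideal_gen s F \<subseteq> ideal_gen s B"
proof
  fix p assume "p \<in> ideal_gen s F"
  then obtain S c where 1: "finite S" "S \<subseteq> F" "\<forall>f\<in>S. poly_in s (c f)" "p = (\<Sum>f\<in>S. c f * f)"
    unfolding ideal_gen_def by blast
  have "(\<Sum>f\<in>S. c f * f) \<in> ideal_gen s B" using 1(1,2,3)
  proof (induction S rule: finite_induct)
    case empty then show ?case by (simp add: ideal_zero)
  next
    case (insert x S)
    have "x \<in> ideal_gen s B" using insert.prems assms by blast
    then have a: "c x * x \<in> ideal_gen s B" using insert.prems by (intro ideal_mult) auto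
    have b: "(\<Sum>f\<in>S. c f * f) \<in> ideal_gen s B" using insert.prems by (intro insert.IH) auto
    show ?case using ideal_add[OF a b] insert.hyps by simp
  qed
  then show "p \<in> ideal_gen s B" using 1(4) by simp
qed

lemma keys_sp: "Poly_Mapping.keys (sp a) = {a}" by (simp add: sp_def)

lemma keys_single_sub: "Poly_Mapping.keys (Poly_Mapping.single m a) \<subseteq> {m}"
  by simp

lemma binom:
  assumes "Poly_Mapping.keys m1 \<subseteq> {..<s}" "Poly_Mapping.keys m2 \<subseteq> {..<s}"
  shows "is_binomial (Poly_Mapping.single m1 a + Poly_Mapping.single m2 b) \<and>
         poly_in s (Poly_Mapping.single m1 a + Poly_Mapping.single m2 b)"
proof -
  have k: "Poly_Mapping.keys (Poly_Mapping.single m1 a + Poly_Mapping.single m2 b) \<subseteq> {m1, m2}"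
    using keys_add[of "Poly_Mapping.single m1 a" "Poly_Mapping.single m2 b"]
      keys_single_sub[of m1 a] keys_single_sub[of m2 b] by blast
  have "card (Poly_Mapping.keys (Poly_Mapping.single m1 a + Poly_Mapping.single m2 b)) \<le> card {m1, m2}"
    by (rule card_mono[OF _ k]) simp
  also have "\<dots> \<le> 2" by (simp add: card_insert_le_m1)
  finally have 1: "is_binomial (Poly_Mapping.single m1 a + Poly_Mapping.single m2 b)"
    unfolding is_binomial_def .
  have "vars (Poly_Mapping.single m1 a + Poly_Mapping.single m2 b) \<subseteq> {..<s}"
  proof
    fix v assume "v \<in> vars (Poly_Mapping.single m1 a + Poly_Mapping.single m2 b)"
    then obtain m where "m \<in> Poly_Mapping.keys (Poly_Mapping.single m1 a + Poly_Mapping.single m2 b)"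
       "v \<in> Poly_Mapping.keys m" unfolding vars_def by blast
    then show "v \<in> {..<s}" using k assms by blast
  qed
  then show ?thesis using 1 unfolding poly_in_def by blast
qed

lemma peval_zero: "peval p (\<lambda>_. 0) = Poly_Mapping.lookup p 0"
proof -
  have "peval p (\<lambda>_. 0) = (\<Sum>m\<in>Poly_Mapping.keys p. Poly_Mapping.lookup p m * (if m = 0 then 1 else 0))"
    unfolding peval_def
  proof (intro sum.cong refl)
    fix m assume "m \<in> Poly_Mapping.keys p"
    show "Poly_Mapping.lookup p m * (\<Prod>i\<in>Poly_Mapping.keys m. (0::real) ^ Poly_Mapping.lookup m i) =
          Poly_Mapping.lookup p m * (if m = 0 then 1 else 0)"
    proof (cases "m = 0")
      case False
      then obtain i where "i \<in> Poly_Mapping.keys m" by (metis keys_eq_empty ex_in_conv)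
      then have "(\<Prod>i\<in>Poly_Mapping.keys m. (0::real) ^ Poly_Mapping.lookup m i) = 0"
        by (intro prod_zero) (auto simp: in_keys_iff)
      then show ?thesis using False by simp
    qed simp
  qed
  also have "\<dots> = (\<Sum>m\<in>Poly_Mapping.keys p. if m = 0 then Poly_Mapping.lookup p m else 0)"
    by (intro sum.cong) auto
  also have "\<dots> = Poly_Mapping.lookup p 0"
    by (simp add: sum.delta in_keys_iff)
  finally show ?thesis .
qed

lemma sp_ne0: "sp a \<noteq> 0" "sp a + sp b \<noteq> 0"
  by (metis lookup_sp lookup_zero one_neq_zero)
     (metis add_is_0 lookup_add lookup_sp lookup_zero one_neq_zero)

lemma mass_action_lookup0:
  assumes "\<forall>r\<in>set R. fst r \<noteq> 0"
  shows "Poly_Mapping.lookup (mass_action_poly R k i) 0 = 0"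
  unfolding mass_action_poly_def lookup_sum
  using assms by (intro sum.neutral) (auto simp: lookup_single when_def)

lemma erk_ne0: "\<forall>r\<in>set erk_network. fst r \<noteq> 0"
  unfolding erk_network_def by (simp add: sp_ne0)

fun mal :: "(complex \<times> complex) list \<Rightarrow> (nat \<Rightarrow> real) \<Rightarrow> nat \<Rightarrow> nat \<Rightarrow> mpoly" where
  "mal [] k i n = 0"
| "mal (r # rs) k i n = Poly_Mapping.single (fst r) (k (n + 1) * (real (Poly_Mapping.lookup (snd r) i) - real (Poly_Mapping.lookup (fst r) i))) + mal rs k i (n + 1)"

lemma mal_sum: "mal R k i n = (\<Sum>j<length R. Poly_Mapping.single (fst (R!j))
        (k (n + j + 1) * (real (Poly_Mapping.lookup (snd (R!j)) i) - real (Poly_Mapping.lookup (fst (R!j)) i))))"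
proof (induction R arbitrary: n)
  case Nil then show ?case by simp
next
  case (Cons r rs)
  show ?case by (simp add: Cons.IH sum.lessThan_Suc_shift algebra_simps del: sum.lessThan_Suc)
qed

lemma mass_action_mal: "mass_action_poly R k i = mal R k i 0"
  unfolding mass_action_poly_def mal_sum by simp

lemmas CS2 = mass_action_mal erk_network_def spdefs lookup_add lookup_sp single_uminus single_add single_diff numeral_eq_Suc

lemma FE0: "mass_action_poly erk_network k 0 = - Poly_Mapping.single (sp 0 + sp 8) (k 1) + Poly_Mapping.single (sp 12) (k 2) + Poly_Mapping.single (sp 17) (k 6)"
  by (simp add: CS2 algebra_simps)

lemma FE1: "mass_action_poly erk_network k 1 = Poly_Mapping.single (sp 12) (k 3) - Poly_Mapping.single (sp 1 + sp 9) (k 4) + Poly_Mapping.single (sp 17) (k 5) - Poly_Mapping.single (sp 2 + sp 1) (k 7) + Poly_Mapping.single (sp 13) (k 8) + Poly_Mapping.single (sp 13) (k 9) - Poly_Mapping.single (sp 3 + sp 1) (k 10) + Poly_Mapping.single (sp 14) (k 11) + Poly_Mapping.single (sp 14) (k 12)"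
  by (simp add: CS2 algebra_simps)

lemma FE2: "mass_action_poly erk_network k 2 = - Poly_Mapping.single (sp 2 + sp 1) (k 7) + Poly_Mapping.single (sp 13) (k 8) + Poly_Mapping.single (sp 19) (k 18)"
  by (simp add: CS2 algebra_simps)

lemma FE3: "mass_action_poly erk_network k 3 = Poly_Mapping.single (sp 13) (k 9) - Poly_Mapping.single (sp 3 + sp 1) (k 10) + Poly_Mapping.single (sp 14) (k 11) + Poly_Mapping.single (sp 18) (k 15) - Poly_Mapping.single (sp 3 + sp 10) (k 16) + Poly_Mapping.single (sp 19) (k 17)"
  by (simp add: CS2 algebra_simps)

lemma FE4: "mass_action_poly erk_network k 4 = Poly_Mapping.single (sp 14) (k 12) - Poly_Mapping.single (sp 4 + sp 10) (k 13) + Poly_Mapping.single (sp 18) (k 14) - Poly_Mapping.single (sp 5 + sp 4) (k 19) + Poly_Mapping.single (sp 15) (k 20) + Poly_Mapping.single (sp 15) (k 21) - Poly_Mapping.single (sp 6 + sp 4) (k 22) + Poly_Mapping.single (sp 16) (k 23) + Poly_Mapping.single (sp 16) (k 24)"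
  by (simp add: CS2 algebra_simps)

lemma FE5: "mass_action_poly erk_network k 5 = - Poly_Mapping.single (sp 5 + sp 4) (k 19) + Poly_Mapping.single (sp 15) (k 20) + Poly_Mapping.single (sp 21) (k 30)"
  by (simp add: CS2 algebra_simps)

lemma FE6: "mass_action_poly erk_network k 6 = Poly_Mapping.single (sp 15) (k 21) - Poly_Mapping.single (sp 6 + sp 4) (k 22) + Poly_Mapping.single (sp 16) (k 23) + Poly_Mapping.single (sp 20) (k 27) - Poly_Mapping.single (sp 6 + sp 11) (k 28) + Poly_Mapping.single (sp 21) (k 29)"
  by (simp add: CS2 algebra_simps)

lemma FE7: "mass_action_poly erk_network k 7 = Poly_Mapping.single (sp 16) (k 24) - Poly_Mapping.single (sp 7 + sp 11) (k 25) + Poly_Mapping.single (sp 20) (k 26)"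
  by (simp add: CS2 algebra_simps)

lemma FE8: "mass_action_poly erk_network k 8 = - Poly_Mapping.single (sp 0 + sp 8) (k 1) + Poly_Mapping.single (sp 12) (k 2) + Poly_Mapping.single (sp 12) (k 3)"
  by (simp add: CS2 algebra_simps)

lemma FE9: "mass_action_poly erk_network k 9 = - Poly_Mapping.single (sp 1 + sp 9) (k 4) + Poly_Mapping.single (sp 17) (k 5) + Poly_Mapping.single (sp 17) (k 6)"
  by (simp add: CS2 algebra_simps)

lemma FE10: "mass_action_poly erk_network k 10 = - Poly_Mapping.single (sp 4 + sp 10) (k 13) + Poly_Mapping.single (sp 18) (k 14) + Poly_Mapping.single (sp 18) (k 15) - Poly_Mapping.single (sp 3 + sp 10) (k 16) + Poly_Mapping.single (sp 19) (k 17) + Poly_Mapping.single (sp 19) (k 18)"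
  by (simp add: CS2 algebra_simps)

lemma FE11: "mass_action_poly erk_network k 11 = - Poly_Mapping.single (sp 7 + sp 11) (k 25) + Poly_Mapping.single (sp 20) (k 26) + Poly_Mapping.single (sp 20) (k 27) - Poly_Mapping.single (sp 6 + sp 11) (k 28) + Poly_Mapping.single (sp 21) (k 29) + Poly_Mapping.single (sp 21) (k 30)"
  by (simp add: CS2 algebra_simps)

lemma FE12: "mass_action_poly erk_network k 12 = Poly_Mapping.single (sp 0 + sp 8) (k 1) - Poly_Mapping.single (sp 12) (k 2) - Poly_Mapping.single (sp 12) (k 3)"
  by (simp add: CS2 algebra_simps)

lemma FE13: "mass_action_poly erk_network k 13 = Poly_Mapping.single (sp 2 + sp 1) (k 7) - Poly_Mapping.single (sp 13) (k 8) - Poly_Mapping.single (sp 13) (k 9)"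
  by (simp add: CS2 algebra_simps)

lemma FE14: "mass_action_poly erk_network k 14 = Poly_Mapping.single (sp 3 + sp 1) (k 10) - Poly_Mapping.single (sp 14) (k 11) - Poly_Mapping.single (sp 14) (k 12)"
  by (simp add: CS2 algebra_simps)

lemma FE15: "mass_action_poly erk_network k 15 = Poly_Mapping.single (sp 5 + sp 4) (k 19) - Poly_Mapping.single (sp 15) (k 20) - Poly_Mapping.single (sp 15) (k 21)"
  by (simp add: CS2 algebra_simps)

lemma FE16: "mass_action_poly erk_network k 16 = Poly_Mapping.single (sp 6 + sp 4) (k 22) - Poly_Mapping.single (sp 16) (k 23) - Poly_Mapping.single (sp 16) (k 24)"
  by (simp add: CS2 algebra_simps)

lemma FE17: "mass_action_poly erk_network k 17 = Poly_Mapping.single (sp 1 + sp 9) (k 4) - Poly_Mapping.single (sp 17) (k 5) - Poly_Mapping.single (sp 17) (k 6)"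
  by (simp add: CS2 algebra_simps)

lemma FE18: "mass_action_poly erk_network k 18 = Poly_Mapping.single (sp 4 + sp 10) (k 13) - Poly_Mapping.single (sp 18) (k 14) - Poly_Mapping.single (sp 18) (k 15)"
  by (simp add: CS2 algebra_simps)

lemma FE19: "mass_action_poly erk_network k 19 = Poly_Mapping.single (sp 3 + sp 10) (k 16) - Poly_Mapping.single (sp 19) (k 17) - Poly_Mapping.single (sp 19) (k 18)"
  by (simp add: CS2 algebra_simps)

lemma FE20: "mass_action_poly erk_network k 20 = Poly_Mapping.single (sp 7 + sp 11) (k 25) - Poly_Mapping.single (sp 20) (k 26) - Poly_Mapping.single (sp 20) (k 27)"
  by (simp add: CS2 algebra_simps)

lemma FE21: "mass_action_poly erk_network k 21 = Poly_Mapping.single (sp 6 + sp 11) (k 28) - Poly_Mapping.single (sp 21) (k 29) - Poly_Mapping.single (sp 21) (k 30)"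
  by (simp add: CS2 algebra_simps)

lemmas FE = FE0 FE1 FE2 FE3 FE4 FE5 FE6 FE7 FE8 FE9 FE10 FE11 FE12 FE13 FE14 FE15 FE16 FE17 FE18 FE19 FE20 FE21

theorem mainTheorem1:
  fixes k :: "nat \<Rightarrow> real"
  assumes "\<forall>j\<in>{1..30}. k j > 0"
  shows "has_toric_steady_states 22 erk_network k \<and>
         (\<exists>B. (\<forall>b\<in>B. is_binomial b \<and> poly_in 22 b) \<and> steady_state_ideal 22 erk_network k = ideal_gen 22 B)"
proof -
  define F where "F i = mass_action_poly erk_network k i" for i
  define C0 where "C0 = F 0 + F 12"
  define C2 where "C2 = F 2 + F 13"
  define C5 where "C5 = F 5 + F 15"
  define C7 where "C7 = F 7 + F 20"
  define C4 where "C4 = F 4 + F 18 + F 15 + F 16"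
  define B where "B = {F 12, F 17, F 13, F 14, F 18, F 19, F 15, F 16, F 20, F 21, C0, C2, C5, C7, C4}"
  define G where "G = {mass_action_poly erk_network k i | i. i < 22}"
  have SG: "steady_state_ideal 22 erk_network k = ideal_gen 22 G"
    by (simp add: steady_state_ideal_def G_def)
  have FG: "\<And>i. i < 22 \<Longrightarrow> F i \<in> ideal_gen 22 G"
    unfolding F_def G_def by (rule ideal_base) blast
  have BG: "B \<subseteq> ideal_gen 22 G"
    unfolding B_def C0_def C2_def C5_def C7_def C4_def by (simp add: FG ideal_add)
  have BB: "\<And>x. x \<in> B \<Longrightarrow> x \<in> ideal_gen 22 B" by (rule ideal_base)
  have r0: "F 0 = C0 - F 12"
    unfolding C0_def C2_def C5_def C7_def C4_def by simp
  have m0: "F 0 \<in> ideal_gen 22 B"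
    unfolding r0 by (intro ideal_sub ideal_uminus BB) (simp_all add: B_def)
  have r1: "F 1 = - C0 - F 17 - F 13 - F 14"
    unfolding F_def C0_def C2_def C5_def C7_def C4_def FE by (simp add: algebra_simps single_uminus single_add single_diff)
  have m1: "F 1 \<in> ideal_gen 22 B"
    unfolding r1 by (intro ideal_sub ideal_uminus BB) (simp_all add: B_def)
  have r2: "F 2 = C2 - F 13"
    unfolding C0_def C2_def C5_def C7_def C4_def by simp
  have m2: "F 2 \<in> ideal_gen 22 B"
    unfolding r2 by (intro ideal_sub ideal_uminus BB) (simp_all add: B_def)
  have r3: "F 3 = - C2 - C4 - F 14 - F 19"
    unfolding F_def C0_def C2_def C5_def C7_def C4_def FE by (simp add: algebra_simps single_uminus single_add single_diff)
  have m3: "F 3 \<in> ideal_gen 22 B"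
    unfolding r3 by (intro ideal_sub ideal_uminus BB) (simp_all add: B_def)
  have r4: "F 4 = C4 - F 18 - F 15 - F 16"
    unfolding C0_def C2_def C5_def C7_def C4_def by simp
  have m4: "F 4 \<in> ideal_gen 22 B"
    unfolding r4 by (intro ideal_sub ideal_uminus BB) (simp_all add: B_def)
  have r5: "F 5 = C5 - F 15"
    unfolding C0_def C2_def C5_def C7_def C4_def by simp
  have m5: "F 5 \<in> ideal_gen 22 B"
    unfolding r5 by (intro ideal_sub ideal_uminus BB) (simp_all add: B_def)
  have r6: "F 6 = - C5 - C7 - F 16 - F 21"
    unfolding F_def C0_def C2_def C5_def C7_def C4_def FE by (simp add: algebra_simps single_uminus single_add single_diff)
  have m6: "F 6 \<in> ideal_gen 22 B"
    unfolding r6 by (intro ideal_sub ideal_uminus BB) (simp_all add: B_def)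
  have r7: "F 7 = C7 - F 20"
    unfolding C0_def C2_def C5_def C7_def C4_def by simp
  have m7: "F 7 \<in> ideal_gen 22 B"
    unfolding r7 by (intro ideal_sub ideal_uminus BB) (simp_all add: B_def)
  have r8: "F 8 = - F 12"
    unfolding F_def C0_def C2_def C5_def C7_def C4_def FE by (simp add: algebra_simps single_uminus single_add single_diff)
  have m8: "F 8 \<in> ideal_gen 22 B"
    unfolding r8 by (intro ideal_sub ideal_uminus BB) (simp_all add: B_def)
  have r9: "F 9 = - F 17"
    unfolding F_def C0_def C2_def C5_def C7_def C4_def FE by (simp add: algebra_simps single_uminus single_add single_diff)
  have m9: "F 9 \<in> ideal_gen 22 B"
    unfolding r9 by (intro ideal_sub ideal_uminus BB) (simp_all add: B_def)
  have r10: "F 10 = - F 18 - F 19"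
    unfolding F_def C0_def C2_def C5_def C7_def C4_def FE by (simp add: algebra_simps single_uminus single_add single_diff)
  have m10: "F 10 \<in> ideal_gen 22 B"
    unfolding r10 by (intro ideal_sub ideal_uminus BB) (simp_all add: B_def)
  have r11: "F 11 = - F 20 - F 21"
    unfolding F_def C0_def C2_def C5_def C7_def C4_def FE by (simp add: algebra_simps single_uminus single_add single_diff)
  have m11: "F 11 \<in> ideal_gen 22 B"
    unfolding r11 by (intro ideal_sub ideal_uminus BB) (simp_all add: B_def)
  have m12: "F 12 \<in> ideal_gen 22 B" by (rule BB) (simp add: B_def)
  have m13: "F 13 \<in> ideal_gen 22 B" by (rule BB) (simp add: B_def)
  have m14: "F 14 \<in> ideal_gen 22 B" by (rule BB) (simp add: B_def)
  have m15: "F 15 \<in> ideal_gen 22 B" by (rule BB) (simp add: B_def)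
  have m16: "F 16 \<in> ideal_gen 22 B" by (rule BB) (simp add: B_def)
  have m17: "F 17 \<in> ideal_gen 22 B" by (rule BB) (simp add: B_def)
  have m18: "F 18 \<in> ideal_gen 22 B" by (rule BB) (simp add: B_def)
  have m19: "F 19 \<in> ideal_gen 22 B" by (rule BB) (simp add: B_def)
  have m20: "F 20 \<in> ideal_gen 22 B" by (rule BB) (simp add: B_def)
  have m21: "F 21 \<in> ideal_gen 22 B" by (rule BB) (simp add: B_def)
  have GB: "G \<subseteq> ideal_gen 22 B"
  proof
    fix p assume "p \<in> G"
    then obtain i where i: "i < 22" "p = F i" unfolding G_def F_def by blast
    from i(1) have "i = 0 \<or> i = 1 \<or> i = 2 \<or> i = 3 \<or> i = 4 \<or> i = 5 \<or> i = 6 \<or> i = 7 \<or> i = 8 \<or> i = 9 \<or> i = 10 \<or>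
       i = 11 \<or> i = 12 \<or> i = 13 \<or> i = 14 \<or> i = 15 \<or> i = 16 \<or> i = 17 \<or> i = 18 \<or> i = 19 \<or> i = 20 \<or> i = 21"
      by (simp add: numeral_eq_Suc less_Suc_eq)
    then show "p \<in> ideal_gen 22 B" unfolding i(2)
      using m0 m1 m2 m3 m4 m5 m6 m7 m8 m9 m10 m11 m12 m13 m14 m15 m16 m17 m18 m19 m20 m21 by fast
  qed
  have IE: "steady_state_ideal 22 erk_network k = ideal_gen 22 B"
    unfolding SG using ideal_subset[OF GB] ideal_subset[OF BG] by blast
  have e0: "F 12 = Poly_Mapping.single (sp 0 + sp 8) (k 1) + Poly_Mapping.single (sp 12) (-(k 2 + k 3))"
    unfolding F_def C0_def C2_def C5_def C7_def C4_def FE by (simp add: algebra_simps single_uminus single_add single_diff)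
  have h0: "is_binomial (F 12) \<and> poly_in 22 (F 12)"
    unfolding e0 by (rule binom) (simp_all add: keys_sp keys_add_nat)
  have e1: "F 17 = Poly_Mapping.single (sp 1 + sp 9) (k 4) + Poly_Mapping.single (sp 17) (-(k 5 + k 6))"
    unfolding F_def C0_def C2_def C5_def C7_def C4_def FE by (simp add: algebra_simps single_uminus single_add single_diff)
  have h1: "is_binomial (F 17) \<and> poly_in 22 (F 17)"
    unfolding e1 by (rule binom) (simp_all add: keys_sp keys_add_nat)
  have e2: "F 13 = Poly_Mapping.single (sp 2 + sp 1) (k 7) + Poly_Mapping.single (sp 13) (-(k 8 + k 9))"
    unfolding F_def C0_def C2_def C5_def C7_def C4_def FE by (simp add: algebra_simps single_uminus single_add single_diff)
  have h2: "is_binomial (F 13) \<and> poly_in 22 (F 13)"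
    unfolding e2 by (rule binom) (simp_all add: keys_sp keys_add_nat)
  have e3: "F 14 = Poly_Mapping.single (sp 3 + sp 1) (k 10) + Poly_Mapping.single (sp 14) (-(k 11 + k 12))"
    unfolding F_def C0_def C2_def C5_def C7_def C4_def FE by (simp add: algebra_simps single_uminus single_add single_diff)
  have h3: "is_binomial (F 14) \<and> poly_in 22 (F 14)"
    unfolding e3 by (rule binom) (simp_all add: keys_sp keys_add_nat)
  have e4: "F 18 = Poly_Mapping.single (sp 4 + sp 10) (k 13) + Poly_Mapping.single (sp 18) (-(k 14 + k 15))"
    unfolding F_def C0_def C2_def C5_def C7_def C4_def FE by (simp add: algebra_simps single_uminus single_add single_diff)
  have h4: "is_binomial (F 18) \<and> poly_in 22 (F 18)"
    unfolding e4 by (rule binom) (simp_all add: keys_sp keys_add_nat)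
  have e5: "F 19 = Poly_Mapping.single (sp 3 + sp 10) (k 16) + Poly_Mapping.single (sp 19) (-(k 17 + k 18))"
    unfolding F_def C0_def C2_def C5_def C7_def C4_def FE by (simp add: algebra_simps single_uminus single_add single_diff)
  have h5: "is_binomial (F 19) \<and> poly_in 22 (F 19)"
    unfolding e5 by (rule binom) (simp_all add: keys_sp keys_add_nat)
  have e6: "F 15 = Poly_Mapping.single (sp 5 + sp 4) (k 19) + Poly_Mapping.single (sp 15) (-(k 20 + k 21))"
    unfolding F_def C0_def C2_def C5_def C7_def C4_def FE by (simp add: algebra_simps single_uminus single_add single_diff)
  have h6: "is_binomial (F 15) \<and> poly_in 22 (F 15)"
    unfolding e6 by (rule binom) (simp_all add: keys_sp keys_add_nat)
  have e7: "F 16 = Poly_Mapping.single (sp 6 + sp 4) (k 22) + Poly_Mapping.single (sp 16) (-(k 23 + k 24))"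
    unfolding F_def C0_def C2_def C5_def C7_def C4_def FE by (simp add: algebra_simps single_uminus single_add single_diff)
  have h7: "is_binomial (F 16) \<and> poly_in 22 (F 16)"
    unfolding e7 by (rule binom) (simp_all add: keys_sp keys_add_nat)
  have e8: "F 20 = Poly_Mapping.single (sp 7 + sp 11) (k 25) + Poly_Mapping.single (sp 20) (-(k 26 + k 27))"
    unfolding F_def C0_def C2_def C5_def C7_def C4_def FE by (simp add: algebra_simps single_uminus single_add single_diff)
  have h8: "is_binomial (F 20) \<and> poly_in 22 (F 20)"
    unfolding e8 by (rule binom) (simp_all add: keys_sp keys_add_nat)
  have e9: "F 21 = Poly_Mapping.single (sp 6 + sp 11) (k 28) + Poly_Mapping.single (sp 21) (-(k 29 + k 30))"
    unfolding F_def C0_def C2_def C5_def C7_def C4_def FE by (simp add: algebra_simps single_uminus single_add single_diff)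
  have h9: "is_binomial (F 21) \<and> poly_in 22 (F 21)"
    unfolding e9 by (rule binom) (simp_all add: keys_sp keys_add_nat)
  have e10: "C0 = Poly_Mapping.single (sp 17) (k 6) + Poly_Mapping.single (sp 12) (- k 3)"
    unfolding F_def C0_def C2_def C5_def C7_def C4_def FE by (simp add: algebra_simps single_uminus single_add single_diff)
  have h10: "is_binomial (C0) \<and> poly_in 22 (C0)"
    unfolding e10 by (rule binom) (simp_all add: keys_sp keys_add_nat)
  have e11: "C2 = Poly_Mapping.single (sp 19) (k 18) + Poly_Mapping.single (sp 13) (- k 9)"
    unfolding F_def C0_def C2_def C5_def C7_def C4_def FE by (simp add: algebra_simps single_uminus single_add single_diff)
  have h11: "is_binomial (C2) \<and> poly_in 22 (C2)"
    unfolding e11 by (rule binom) (simp_all add: keys_sp keys_add_nat)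
  have e12: "C5 = Poly_Mapping.single (sp 21) (k 30) + Poly_Mapping.single (sp 15) (- k 21)"
    unfolding F_def C0_def C2_def C5_def C7_def C4_def FE by (simp add: algebra_simps single_uminus single_add single_diff)
  have h12: "is_binomial (C5) \<and> poly_in 22 (C5)"
    unfolding e12 by (rule binom) (simp_all add: keys_sp keys_add_nat)
  have e13: "C7 = Poly_Mapping.single (sp 16) (k 24) + Poly_Mapping.single (sp 20) (- k 27)"
    unfolding F_def C0_def C2_def C5_def C7_def C4_def FE by (simp add: algebra_simps single_uminus single_add single_diff)
  have h13: "is_binomial (C7) \<and> poly_in 22 (C7)"
    unfolding e13 by (rule binom) (simp_all add: keys_sp keys_add_nat)
  have e14: "C4 = Poly_Mapping.single (sp 14) (k 12) + Poly_Mapping.single (sp 18) (- k 15)"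
    unfolding F_def C0_def C2_def C5_def C7_def C4_def FE by (simp add: algebra_simps single_uminus single_add single_diff)
  have h14: "is_binomial (C4) \<and> poly_in 22 (C4)"
    unfolding e14 by (rule binom) (simp_all add: keys_sp keys_add_nat)
  have BIN: "\<forall>b\<in>B. is_binomial b \<and> poly_in 22 b"
    unfolding B_def using h0 h1 h2 h3 h4 h5 h6 h7 h8 h9 h10 h11 h12 h13 h14 by blast
  have Z: "\<exists>x. (\<forall>i<22. x i \<ge> (0::real)) \<and> (\<forall>i<22. peval (mass_action_poly erk_network k i) x = 0)"
    by (rule exI[of _ "\<lambda>_. 0"]) (simp add: peval_zero mass_action_lookup0[OF erk_ne0])
  show ?thesis unfolding has_toric_steady_states_def using BIN IE Z by blast
qed

end
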